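(* Let $\mathcal{G}$ be a hereditary and multiplicative graph family with $\mathcal{G}_n\ne\emptyset$ for all $n$, let $r\geq 2$ and $0\leq \alpha\leq 1-\frac{1}{r}$. Suppose that $\lambda_{\alpha}(\mathcal{G}_n)>\left(1-\frac{1}{r}\right)n-\left(1-\frac{1}{r}\right)$ for all sufficiently large $n$. Then for every $n\ge1$ and every $G\in \mathcal{G}_n$, $$\lambda_{\alpha}(G)\leq \pi_{\alpha}(\mathcal{G})\,n,$$ where $\pi_\alpha(\mathcal{G})=\lim_{n\to\infty}\lambda_\alpha(\mathcal{G}_n)/n$ (which exists under these hypotheses).
   Context: $\lambda_\alpha(G)$ is the largest eigenvalue of $A_\alpha(G)=\alpha D(G)+(1-\alpha)A(G)$ ($A$ adjacency matrix, $D$ diagonal degree matrix). $\mathcal{G}_n$ is the set of $n$-vertex graphs in $\mathcal{G}$ and $\lambda_\alpha(\mathcal{G}_n)=\max_{G\in\mathcal{G}_n}\lambda_\alpha(G)$. A family is hereditary if closed under taking induced subgraphs. The blow-up $G^p$ of $G$ replaces each vertex by $p$ independent vertices and each edge by a complete bipartite graph $K_{p,p}$; a family $\mathcal{G}$ is multiplicative if $G\in\mathcal{G}$ implies $G^p\in\mathcal{G}$ for all integers $p\ge1$. *)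

theory Defs
  imports Complex_Main
begin

type_synonym graph = "nat \<times> (nat \<Rightarrow> nat \<Rightarrow> bool)"

definition is_graph :: "graph \<Rightarrow> bool" where
  "is_graph G \<longleftrightarrow> (let (n, E) = G in
     (\<forall>u v. E u v \<longrightarrow> u < n \<and> v < n) \<and>
     (\<forall>u v. E u v \<longrightarrow> E v u) \<and> (\<forall>u. \<not> E u u))"

definition degree :: "graph \<Rightarrow> nat \<Rightarrow> nat" where
  "degree G u = card {v \<in> {0..<fst G}. snd G u v}"

definition A_alpha :: "real \<Rightarrow> graph \<Rightarrow> nat \<Rightarrow> nat \<Rightarrow> real" where
  "A_alpha \<alpha> G i j =
     (if i = j then \<alpha> * real (degree G i) else 0) +
     (1 - \<alpha>) * (if snd G i j then 1 else 0)"

definition is_eigenvalue_alpha :: "real \<Rightarrow> graph \<Rightarrow> real \<Rightarrow> bool" where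
  "is_eigenvalue_alpha \<alpha> G \<mu> \<longleftrightarrow>
     (\<exists>x :: nat \<Rightarrow> real. (\<exists>i < fst G. x i \<noteq> 0) \<and>
        (\<forall>i < fst G. (\<Sum>j<fst G. A_alpha \<alpha> G i j * x j) = \<mu> * x i))"

definition lambda_alpha :: "real \<Rightarrow> graph \<Rightarrow> real" where
  "lambda_alpha \<alpha> G = Max {\<mu>. is_eigenvalue_alpha \<alpha> G \<mu>}"

definition family_n :: "graph set \<Rightarrow> nat \<Rightarrow> graph set" where
  "family_n \<G> n = {G \<in> \<G>. fst G = n}"

definition lambda_alpha_fam :: "real \<Rightarrow> graph set \<Rightarrow> nat \<Rightarrow> real" where
  "lambda_alpha_fam \<alpha> \<G> n = Max (lambda_alpha \<alpha> ` family_n \<G> n)"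

text \<open>Induced subgraph of G on an injective image f({0..<m}), relabelled to {0..<m}.
Taking m = n and f a bijection this also covers isomorphic copies.\<close>
definition induced_sub :: "graph \<Rightarrow> nat \<Rightarrow> (nat \<Rightarrow> nat) \<Rightarrow> graph" where
  "induced_sub G m f = (m, \<lambda>i j. i < m \<and> j < m \<and> snd G (f i) (f j))"

definition hereditary :: "graph set \<Rightarrow> bool" where
  "hereditary \<G> \<longleftrightarrow> (\<forall>G \<in> \<G>. \<forall>m f. inj_on f {0..<m} \<and> f ` {0..<m} \<subseteq> {0..<fst G}
      \<longrightarrow> induced_sub G m f \<in> \<G>)"

definition blowup :: "graph \<Rightarrow> nat \<Rightarrow> graph" where
  "blowup G p = (fst G * p,
     \<lambda>u v. u < fst G * p \<and> v < fst G * p \<and> snd G (u div p) (v div p))"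

definition multiplicative :: "graph set \<Rightarrow> bool" where
  "multiplicative \<G> \<longleftrightarrow> (\<forall>G \<in> \<G>. \<forall>p \<ge> 1. blowup G p \<in> \<G>)"

end

theory Submission
  imports Defs "HOL-Analysis.Function_Topology" "Jordan_Normal_Form.Char_Poly"
begin


definition quad :: "(nat \<Rightarrow> nat \<Rightarrow> real) \<Rightarrow> nat \<Rightarrow> (nat \<Rightarrow> real) \<Rightarrow> real" where
  "quad A n x = (\<Sum>i<n. \<Sum>j<n. A i j * x i * x j)"
definition nrm :: "nat \<Rightarrow> (nat \<Rightarrow> real) \<Rightarrow> real" where
  "nrm n x = (\<Sum>i<n. (x i)^2)"

lemma nrm_nonneg: "nrm n x \<ge> 0" unfolding nrm_def by (simp add: sum_nonneg)

lemma nrm_zero: "nrm n x = 0 \<Longrightarrow> i < n \<Longrightarrow> x i = 0"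
  unfolding nrm_def by (simp add: sum_nonneg_eq_0_iff)

lemma quad_cong: "(\<And>i. i < n \<Longrightarrow> x i = y i) \<Longrightarrow> quad A n x = quad A n y"
  unfolding quad_def by (intro sum.cong refl) auto

lemma quad_zero: "nrm n x = 0 \<Longrightarrow> quad A n x = 0"
proof -
  assume "nrm n x = 0"
  then have "quad A n x = quad A n (\<lambda>_. 0)" by (intro quad_cong) (simp add: nrm_zero)
  then show ?thesis by (simp add: quad_def)
qed

lemma quad_scale: "quad A n (\<lambda>i. c * x i) = c^2 * quad A n x"
  unfolding quad_def power2_eq_square by (simp add: sum_distrib_left algebra_simps)

lemma nrm_scale: "nrm n (\<lambda>i. c * x i) = c^2 * nrm n x"
  unfolding nrm_def by (simp add: sum_distrib_left algebra_simps power_mult_distrib)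

lemma compact_box: "compact (PiE UNIV (\<lambda>i::nat. if i < n then {-1..1::real} else {0}))"
proof -
  have "compactin (product_topology (\<lambda>i. euclidean) UNIV) (PiE UNIV (\<lambda>i::nat. if i < n then {-1..1::real} else {0}))"
    unfolding compactin_PiE by (auto simp: compactin_euclidean_iff)
  then show ?thesis by (simp add: euclidean_product_topology compactin_euclidean_iff)
qed

lemma cont_nrm: "continuous_on S (nrm n)"
  unfolding nrm_def
  by (intro continuous_intros continuous_on_subset[OF continuous_on_product_coordinates]) auto

lemma cont_quad: "continuous_on S (quad A n)"
  unfolding quad_def
  by (intro continuous_intros continuous_on_subset[OF continuous_on_product_coordinates]) auto

lemma sum_delta_r: "k < (n::nat) \<Longrightarrow> (\<Sum>j<n. f j * (if j = k then t else 0)) = f k * (t::real)"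
proof -
  assume k: "k < n"
  have "(\<Sum>j<n. f j * (if j = k then t else 0)) = (\<Sum>j<n. if j = k then f k * t else 0)"
    by (intro sum.cong) auto
  then show ?thesis using k by (simp add: sum.delta)
qed

lemma quad_pert:
  assumes sym: "\<And>i j. i < n \<Longrightarrow> j < n \<Longrightarrow> A i j = A j i" and k: "k < n"
  shows "quad A n (\<lambda>i. x i + (if i = k then t else 0)) = quad A n x + 2*t*(\<Sum>j<n. A k j * x j) + t^2 * A k k"
proof -
  define d where "d = (\<lambda>i::nat. if i = k then t else 0)"
  have e: "A i j * (x i + d i) * (x j + d j) = A i j * x i * x j + (A i j * x i) * d j + (A j i * x j) * d i + (A i j * d i) * d j" if "i < n" "j < n" for i j
    using sym[OF that] by (simp add: algebra_simps)
  have s1: "(\<Sum>i<n. \<Sum>j<n. (A i j * x i) * d j) = t * (\<Sum>j<n. A k j * x j)"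
  proof -
    have "(\<Sum>i<n. \<Sum>j<n. (A i j * x i) * d j) = (\<Sum>i<n. (A i k * x i) * t)"
      unfolding d_def using k by (simp add: sum_delta_r)
    also have "\<dots> = t * (\<Sum>j<n. A k j * x j)"
      by (simp add: sum_distrib_left sym k algebra_simps)
    finally show ?thesis .
  qed
  have s2: "(\<Sum>i<n. \<Sum>j<n. (A j i * x j) * d i) = t * (\<Sum>j<n. A k j * x j)"
  proof -
    have "(\<Sum>i<n. \<Sum>j<n. (A j i * x j) * d i) = (\<Sum>i<n. (\<Sum>j<n. A j i * x j) * d i)"
      by (simp add: sum_distrib_right)
    also have "\<dots> = (\<Sum>j<n. A j k * x j) * t" unfolding d_def using k by (rule sum_delta_r)
    also have "\<dots> = t * (\<Sum>j<n. A k j * x j)" using sym k by (simp add: mult.commute)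
    finally show ?thesis .
  qed
  have s3: "(\<Sum>i<n. \<Sum>j<n. (A i j * d i) * d j) = t^2 * A k k"
  proof -
    have "(\<Sum>i<n. \<Sum>j<n. (A i j * d i) * d j) = (\<Sum>i<n. (A i k * d i) * t)"
      unfolding d_def using k by (simp add: sum_delta_r)
    also have "\<dots> = (\<Sum>i<n. (A i k * t) * d i)" by (simp add: algebra_simps)
    also have "\<dots> = t^2 * A k k" unfolding d_def using k by (simp add: sum_delta_r power2_eq_square)
    finally show ?thesis .
  qed
  have "quad A n (\<lambda>i. x i + d i) = (\<Sum>i<n. \<Sum>j<n. A i j * x i * x j) + (\<Sum>i<n. \<Sum>j<n. (A i j * x i) * d j)
     + (\<Sum>i<n. \<Sum>j<n. (A j i * x j) * d i) + (\<Sum>i<n. \<Sum>j<n. (A i j * d i) * d j)"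
  proof -
    have "quad A n (\<lambda>i. x i + d i) = (\<Sum>i<n. \<Sum>j<n. A i j * x i * x j + (A i j * x i) * d j + (A j i * x j) * d i + (A i j * d i) * d j)"
      unfolding quad_def by (intro sum.cong refl) (simp add: e)
    then show ?thesis by (simp add: sum.distrib)
  qed
  then have "quad A n (\<lambda>i. x i + d i) = quad A n x + 2*t*(\<Sum>j<n. A k j * x j) + t^2 * A k k"
    using s1 s2 s3 by (simp add: quad_def)
  then show ?thesis unfolding d_def .
qed

lemma nrm_pert:
  assumes k: "k < n"
  shows "nrm n (\<lambda>i. x i + (if i = k then t else 0)) = nrm n x + 2*t*x k + t^2"
proof -
  have e: "(x i + (if i = k then t else 0))^2 = (x i)^2 + (if i = k then 2*t*x k + t^2 else 0)" for i
    by (simp add: power2_eq_square algebra_simps)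
  show ?thesis unfolding nrm_def e using k by (simp add: sum.distrib)
qed

lemma quadratic_nonpos:
  fixes c d :: real
  assumes "\<And>t. 2*t*c + t^2*d \<le> 0"
  shows "c = 0"
proof (rule ccontr)
  assume c: "c \<noteq> 0"
  obtain a where a: "a = \<bar>d\<bar>" "a \<ge> 0" by simp
  obtain D where D: "D = a + 1" "D > 0" using a by simp
  define t where "t = c / D"
  have "t^2*d \<ge> - (t^2*a)" unfolding a
    by (metis abs_ge_minus_self abs_mult abs_of_nonneg minus_le_iff zero_le_power2)
  then have h1: "2*t*c + t^2*d \<ge> 2*t*c - t^2*a" by simp
  have h2: "2*t*c - t^2*a = c^2 * (2*D - a) / D^2"
    unfolding t_def using D(2) by (simp add: field_simps power2_eq_square)
  have h3: "c^2 * (2*D - a) / D^2 > 0" using c a D by simp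
  show False using assms[of t] h1 h2 h3 by linarith
qed
lemma rayleigh_max:
  assumes sym: "\<And>i j. i < n \<Longrightarrow> j < n \<Longrightarrow> A i j = A j i" and n: "n \<ge> 1"
  shows "\<exists>\<mu> x. (\<exists>i<n. x i \<noteq> 0) \<and> (\<forall>i<n. (\<Sum>j<n. A i j * x j) = \<mu> * x i) \<and> (\<forall>y. quad A n y \<le> \<mu> * nrm n y)"
proof -
  define K where "K = PiE UNIV (\<lambda>i::nat. if i < n then {-1..1::real} else {0}) \<inter> {x. nrm n x = 1}"
  have "closed {x. nrm n x = 1}" by (intro closed_Collect_eq cont_nrm continuous_on_const)
  then have cK: "compact K" unfolding K_def by (intro compact_Int_closed compact_box)
  define e0 where "e0 = (\<lambda>i::nat. if i = 0 then 1 else (0::real))"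
  have "(\<lambda>i. (e0 i)^2) = e0" by (auto simp: e0_def fun_eq_iff)
  then have "nrm n e0 = (\<Sum>i<n. e0 i)" unfolding nrm_def by metis
  also have "\<dots> = 1" using n by (simp add: e0_def)
  finally have "nrm n e0 = 1" .
  then have "e0 \<in> K" unfolding K_def using n by (auto simp: e0_def PiE_iff)
  then have neK: "K \<noteq> {}" by auto
  obtain x where xK: "x \<in> K" and xmax: "\<And>y. y \<in> K \<Longrightarrow> quad A n y \<le> quad A n x"
    using continuous_attains_sup[OF cK neK cont_quad] by blast
  define \<mu> where "\<mu> = quad A n x"
  have nx: "nrm n x = 1" using xK unfolding K_def by auto
  have bound: "quad A n y \<le> \<mu> * nrm n y" for y
  proof (cases "nrm n y = 0")
    case True then show ?thesis by (simp add: quad_zero)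
  next
    case False
    then have np: "nrm n y > 0" using nrm_nonneg[of n y] by simp
    define s where "s = sqrt (nrm n y)"
    have s: "s > 0" "s^2 = nrm n y" using np unfolding s_def by auto
    define z where "z = (\<lambda>i. if i < n then (1/s) * y i else 0)"
    have nz: "nrm n z = nrm n (\<lambda>i. (1/s) * y i)" unfolding nrm_def z_def by simp
    have qz: "quad A n z = quad A n (\<lambda>i. (1/s) * y i)" by (intro quad_cong) (simp add: z_def)
    have nz1: "nrm n z = 1" unfolding nz nrm_scale using s np by (simp add: power_divide)
    have "\<bar>y i\<bar> \<le> s" if "i < n" for i
    proof -
      have "(y i)^2 \<le> nrm n y" unfolding nrm_def
        using that by (intro member_le_sum) auto
      then show ?thesis unfolding s_def by (simp add: real_le_rsqrt)
    qed
    then have "z \<in> K" unfolding K_def using nz1 s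
      by (auto simp: z_def PiE_iff abs_le_iff field_simps) (smt (verit))
    then have "quad A n z \<le> \<mu>" using xmax \<mu>_def by auto
    then have "(1/s)^2 * quad A n y \<le> \<mu>" unfolding qz quad_scale .
    then show ?thesis using s np by (simp add: pos_divide_le_eq power_divide)
  qed
  have eig: "(\<Sum>j<n. A k j * x j) = \<mu> * x k" if k: "k < n" for k
  proof -
    have "2*t*((\<Sum>j<n. A k j * x j) - \<mu> * x k) + t^2*(A k k - \<mu>) \<le> 0" for t
    proof -
      have "quad A n (\<lambda>i. x i + (if i = k then t else 0)) \<le> \<mu> * nrm n (\<lambda>i. x i + (if i = k then t else 0))"
        by (rule bound)
      moreover have "quad A n (\<lambda>i. x i + (if i = k then t else 0)) = \<mu> + 2*t*(\<Sum>j<n. A k j * x j) + t^2 * A k k"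
        using quad_pert[OF sym k, where x=x and t=t] unfolding \<mu>_def by simp
      moreover have "nrm n (\<lambda>i. x i + (if i = k then t else 0)) = 1 + 2*t*x k + t^2"
        using nrm_pert[OF k, where x=x and t=t] nx by simp
      ultimately show ?thesis by (simp add: algebra_simps)
    qed
    from quadratic_nonpos[OF this] show ?thesis by simp
  qed
  have "\<exists>i<n. x i \<noteq> 0"
  proof (rule ccontr)
    assume "\<not> (\<exists>i<n. x i \<noteq> 0)"
    then have "nrm n x = 0" unfolding nrm_def by simp
    then show False using nx by simp
  qed
  then show ?thesis using eig bound by blast
qed



lemma eig_finite: "finite {\<mu>. is_eigenvalue_alpha \<alpha> G \<mu>}"
proof -
  define n where "n = fst G"
  define M :: "real mat" where "M = mat n n (\<lambda>(i,j). A_alpha \<alpha> G i j)"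
  have M: "M \<in> carrier_mat n n" by (simp add: M_def)
  have "{\<mu>. is_eigenvalue_alpha \<alpha> G \<mu>} \<subseteq> {\<mu>. poly (char_poly M) \<mu> = 0}"
  proof
    fix \<mu> assume "\<mu> \<in> {\<mu>. is_eigenvalue_alpha \<alpha> G \<mu>}"
    then obtain x where x0: "\<exists>i<n. x i \<noteq> 0" and ev: "\<forall>i<n. (\<Sum>j<n. A_alpha \<alpha> G i j * x j) = \<mu> * x i"
      unfolding is_eigenvalue_alpha_def n_def by auto
    define v where "v = vec n x"
    have "eigenvector M v \<mu>" unfolding eigenvector_def
    proof (intro conjI)
      show "v \<in> carrier_vec (dim_row M)" using M by (simp add: v_def)
      show "v \<noteq> 0\<^sub>v (dim_row M)" using x0 M by (auto simp: v_def vec_eq_iff)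
      have "(M *\<^sub>v v) $ i = (\<mu> \<cdot>\<^sub>v v) $ i" if "i < n" for i
        using that ev by (simp add: M_def v_def mult_mat_vec_def scalar_prod_def lessThan_atLeast0)
      then show "M *\<^sub>v v = \<mu> \<cdot>\<^sub>v v" using M by (intro eq_vecI) (auto simp: v_def)
    qed
    then have "eigenvalue M \<mu>" unfolding eigenvalue_def by blast
    then show "\<mu> \<in> {\<mu>. poly (char_poly M) \<mu> = 0}" using eigenvalue_root_char_poly[OF M] by simp
  qed
  moreover have "char_poly M \<noteq> 0" using degree_monic_char_poly[OF M] by auto
  ultimately show ?thesis using poly_roots_finite finite_subset by blast
qed

lemma graph_finite: "finite {G. is_graph G \<and> fst G = n}"
proof -
  have "{G. is_graph G \<and> fst G = n} \<subseteq> (\<lambda>S. (n, \<lambda>u v. (u,v) \<in> S)) ` Pow ({0..<n} \<times> {0..<n})"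
  proof
    fix G assume G: "G \<in> {G. is_graph G \<and> fst G = n}"
    obtain m E where GE: "G = (m, E)" by fastforce
    then have m: "m = n" and E: "\<And>u v. E u v \<Longrightarrow> u < n \<and> v < n" using G by (auto simp: is_graph_def)
    have "G = (\<lambda>S. (n, \<lambda>u v. (u,v) \<in> S)) {(u,v). E u v}" using GE m by auto
    moreover have "{(u,v). E u v} \<in> Pow ({0..<n} \<times> {0..<n})" using E by auto
    ultimately show "G \<in> (\<lambda>S. (n, \<lambda>u v. (u,v) \<in> S)) ` Pow ({0..<n} \<times> {0..<n})" by blast
  qed
  then show ?thesis by (rule finite_subset) auto
qed

lemma family_finite: "\<forall>G \<in> \<G>. is_graph G \<Longrightarrow> finite (family_n \<G> n)"
  by (rule finite_subset[OF _ graph_finite[of n]]) (auto simp: family_n_def)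

lemma A_sym: "is_graph G \<Longrightarrow> A_alpha \<alpha> G i j = A_alpha \<alpha> G j i"
  unfolding A_alpha_def is_graph_def by (cases G) auto

lemma lam_props:
  assumes G: "is_graph G" and n: "fst G \<ge> 1"
  shows "is_eigenvalue_alpha \<alpha> G (lambda_alpha \<alpha> G)"
    and "\<And>\<mu>. is_eigenvalue_alpha \<alpha> G \<mu> \<Longrightarrow> \<mu> \<le> lambda_alpha \<alpha> G"
    and "\<And>y. quad (A_alpha \<alpha> G) (fst G) y \<le> lambda_alpha \<alpha> G * nrm (fst G) y"
proof -
  obtain \<mu> x where x0: "\<exists>i<fst G. x i \<noteq> 0"
    and ev: "\<forall>i<fst G. (\<Sum>j<fst G. A_alpha \<alpha> G i j * x j) = \<mu> * x i"
    and bd: "\<forall>y. quad (A_alpha \<alpha> G) (fst G) y \<le> \<mu> * nrm (fst G) y"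
    using rayleigh_max[of "fst G" "A_alpha \<alpha> G", OF A_sym[OF G] n] by blast
  have em: "is_eigenvalue_alpha \<alpha> G \<mu>" unfolding is_eigenvalue_alpha_def using x0 ev by blast
  have fin: "finite {\<mu>. is_eigenvalue_alpha \<alpha> G \<mu>}" by (rule eig_finite)
  have ne: "{\<mu>. is_eigenvalue_alpha \<alpha> G \<mu>} \<noteq> {}" using em by blast
  show "is_eigenvalue_alpha \<alpha> G (lambda_alpha \<alpha> G)"
    using Max_in[OF fin ne] unfolding lambda_alpha_def by simp
  show le: "\<And>\<nu>. is_eigenvalue_alpha \<alpha> G \<nu> \<Longrightarrow> \<nu> \<le> lambda_alpha \<alpha> G"
    unfolding lambda_alpha_def using fin by (intro Max_ge) auto
  show "\<And>y. quad (A_alpha \<alpha> G) (fst G) y \<le> lambda_alpha \<alpha> G * nrm (fst G) y"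
  proof -
    fix y
    have "\<mu> \<le> lambda_alpha \<alpha> G" by (rule le[OF em])
    then have "\<mu> * nrm (fst G) y \<le> lambda_alpha \<alpha> G * nrm (fst G) y"
      by (intro mult_right_mono nrm_nonneg)
    then show "quad (A_alpha \<alpha> G) (fst G) y \<le> lambda_alpha \<alpha> G * nrm (fst G) y" using bd by smt
  qed
qed

lemma deg_sum: "real (Defs.degree G i) = (\<Sum>j<fst G. if snd G i j then 1 else 0)"
proof -
  have "Defs.degree G i = card {v \<in> {..<fst G}. snd G i v}"
    unfolding Defs.degree_def by (simp add: atLeast0LessThan)
  then have "real (Defs.degree G i) = (\<Sum>j\<in>{v \<in> {..<fst G}. snd G i v}. 1)"
    by simp
  also have "\<dots> = (\<Sum>j<fst G. if snd G i j then 1 else 0)"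
    by (rule sum.inter_filter) simp
  finally show ?thesis .
qed

lemma row_sum:
  assumes i: "i < fst G"
  shows "(\<Sum>j<fst G. A_alpha \<alpha> G i j * x j) =
    \<alpha> * real (Defs.degree G i) * x i + (1 - \<alpha>) * (\<Sum>j<fst G. if snd G i j then x j else 0)"
proof -
  have e: "A_alpha \<alpha> G i j * x j = (if j = i then \<alpha> * real (Defs.degree G i) * x i else 0)
     + (1 - \<alpha>) * (if snd G i j then x j else 0)" for j
    unfolding A_alpha_def by (auto simp: algebra_simps)
  show ?thesis unfolding e sum.distrib using i by (simp add: sum_distrib_left)
qed

lemma quad_eig:
  assumes "\<forall>i<n. (\<Sum>j<n. A i j * x j) = \<mu> * x i"
  shows "quad A n x = \<mu> * nrm n x"
proof -
  have "quad A n x = (\<Sum>i<n. x i * (\<Sum>j<n. A i j * x j))"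
    unfolding quad_def by (simp add: sum_distrib_left algebra_simps)
  also have "\<dots> = (\<Sum>i<n. \<mu> * (x i)^2)" using assms by (intro sum.cong) (auto simp: power2_eq_square)
  finally show ?thesis by (simp add: nrm_def sum_distrib_left)
qed

lemma quad_graph:
  "quad (A_alpha \<alpha> G) (fst G) x =
     (\<Sum>i<fst G. \<Sum>j<fst G. if snd G i j then \<alpha> * (x i)^2 + (1 - \<alpha>) * x i * x j else 0)"
proof -
  have "quad (A_alpha \<alpha> G) (fst G) x = (\<Sum>i<fst G. x i * (\<Sum>j<fst G. A_alpha \<alpha> G i j * x j))"
    unfolding quad_def by (simp add: sum_distrib_left algebra_simps)
  also have "\<dots> = (\<Sum>i<fst G. \<Sum>j<fst G. if snd G i j then \<alpha> * (x i)^2 + (1 - \<alpha>) * x i * x j else 0)"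
  proof (intro sum.cong refl)
    fix i assume "i \<in> {..<fst G}"
    then have i: "i < fst G" by simp
    have "(\<Sum>j<fst G. if snd G i j then \<alpha> * (x i)^2 + (1 - \<alpha>) * x i * x j else 0)
       = (\<Sum>j<fst G. \<alpha> * (x i)^2 * (if snd G i j then 1 else 0) + (1 - \<alpha>) * x i * (if snd G i j then x j else 0))"
      by (intro sum.cong) auto
    also have "\<dots> = \<alpha> * (x i)^2 * real (Defs.degree G i) + (1 - \<alpha>) * x i * (\<Sum>j<fst G. if snd G i j then x j else 0)"
      unfolding sum.distrib deg_sum by (simp add: sum_distrib_left)
    finally show "x i * (\<Sum>j<fst G. A_alpha \<alpha> G i j * x j) = (\<Sum>j<fst G. if snd G i j then \<alpha> * (x i)^2 + (1 - \<alpha>) * x i * x j else 0)"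
      unfolding row_sum[OF i] by (simp add: algebra_simps power2_eq_square)
  qed
  finally show ?thesis .
qed

lemma sum_div:
  fixes h :: "nat \<Rightarrow> real"
  assumes p: "p \<ge> 1"
  shows "(\<Sum>v<n*p. h (v div p)) = real p * (\<Sum>j<n. h j)"
proof (induction n)
  case 0 then show ?case by simp
next
  case (Suc n)
  have "(\<Sum>v<Suc n * p. h (v div p)) = (\<Sum>v\<in>{0..<n*p}. h (v div p)) + (\<Sum>v\<in>{n*p..<n*p+p}. h (v div p))"
    by (subst sum.atLeastLessThan_concat) (auto simp: lessThan_atLeast0 add.commute)
  also have "(\<Sum>v\<in>{n*p..<n*p+p}. h (v div p)) = (\<Sum>v\<in>{n*p..<n*p+p}. h n)"
  proof (intro sum.cong refl)
    fix v assume "v \<in> {n*p..<n*p+p}"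
    then have "v div p = n" using p by (auto intro: div_nat_eqI simp: algebra_simps)
    then show "h (v div p) = h n" by simp
  qed
  also have "\<dots> = real p * h n" by simp
  finally show ?case using Suc by (simp add: lessThan_atLeast0 algebra_simps)
qed

lemma blow_eig:
  assumes ev: "is_eigenvalue_alpha \<alpha> G \<mu>" and p: "p \<ge> 1"
  shows "is_eigenvalue_alpha \<alpha> (blowup G p) (real p * \<mu>)"
proof -
  define n where "n = fst G"
  obtain x where x0: "\<exists>i<n. x i \<noteq> 0" and evx: "\<forall>i<n. (\<Sum>j<n. A_alpha \<alpha> G i j * x j) = \<mu> * x i"
    using ev unfolding is_eigenvalue_alpha_def n_def by auto
  define y where "y = (\<lambda>u. x (u div p))"
  have fb: "fst (blowup G p) = n * p" by (simp add: blowup_def n_def)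
  have sb: "snd (blowup G p) u v = (u < n*p \<and> v < n*p \<and> snd G (u div p) (v div p))" for u v
    by (simp add: blowup_def n_def)
  obtain i where i: "i < n" "x i \<noteq> 0" using x0 by blast
  have y0: "\<exists>u<fst (blowup G p). y u \<noteq> 0"
  proof (intro exI conjI)
    show "i * p < fst (blowup G p)" using i p fb by simp
    show "y (i * p) \<noteq> 0" using i p by (simp add: y_def)
  qed
  have "(\<Sum>v<fst (blowup G p). A_alpha \<alpha> (blowup G p) u v * y v) = real p * \<mu> * y u"
    if u: "u < fst (blowup G p)" for u
  proof -
    define k where "k = u div p"
    have un: "u < n * p" using u fb by simp
    have k: "k < n" using un p unfolding k_def by (simp add: less_mult_imp_div_less)
    have dg: "real (Defs.degree (blowup G p) u) = real p * real (Defs.degree G k)"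
    proof -
      have "real (Defs.degree (blowup G p) u) = (\<Sum>v<n*p. if snd G k (v div p) then 1 else 0)"
        unfolding deg_sum fb sb k_def using un by (intro sum.cong) auto
      also have "\<dots> = real p * real (Defs.degree G k)"
        unfolding deg_sum n_def by (rule sum_div[OF p])
      finally show ?thesis .
    qed
    have ss: "(\<Sum>v<n*p. if snd (blowup G p) u v then y v else 0) = real p * (\<Sum>j<n. if snd G k j then x j else 0)"
    proof -
      have "(\<Sum>v<n*p. if snd (blowup G p) u v then y v else 0) = (\<Sum>v<n*p. if snd G k (v div p) then x (v div p) else 0)"
        unfolding sb k_def y_def using un by (intro sum.cong) auto
      also have "\<dots> = real p * (\<Sum>j<n. if snd G k j then x j else 0)" by (rule sum_div[OF p])
      finally show ?thesis .
    qed
    have "(\<Sum>v<fst (blowup G p). A_alpha \<alpha> (blowup G p) u v * y v)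
        = \<alpha> * real (Defs.degree (blowup G p) u) * y u + (1 - \<alpha>) * (\<Sum>v<n*p. if snd (blowup G p) u v then y v else 0)"
      using row_sum[OF u] fb by simp
    also have "\<dots> = real p * (\<alpha> * real (Defs.degree G k) * x k + (1 - \<alpha>) * (\<Sum>j<n. if snd G k j then x j else 0))"
      unfolding dg ss by (simp add: y_def k_def algebra_simps)
    also have "\<dots> = real p * (\<mu> * x k)" using row_sum[of k G \<alpha> x] evx k unfolding n_def by simp
    finally show ?thesis by (simp add: y_def k_def)
  qed
  then show ?thesis unfolding is_eigenvalue_alpha_def using y0 by blast
qed



definition skip :: "nat \<Rightarrow> nat \<Rightarrow> nat" where
  "skip v i = (if i < v then i else Suc i)"

lemma skip_inj: "inj_on (skip v) A"
  unfolding inj_on_def skip_def by auto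

lemma skip_img: "v < N \<Longrightarrow> skip v ` {0..<N-1} = {..<N} - {v}"
proof
  assume v: "v < N"
  show "skip v ` {0..<N-1} \<subseteq> {..<N} - {v}" using v by (auto simp: skip_def)
  show "{..<N} - {v} \<subseteq> skip v ` {0..<N-1}"
  proof
    fix w assume w: "w \<in> {..<N} - {v}"
    show "w \<in> skip v ` {0..<N-1}"
    proof (cases "w < v")
      case True
      then have "w = skip v w" "w \<in> {0..<N-1}" using v by (auto simp: skip_def)
      then show ?thesis by blast
    next
      case False
      then have "w > v" using w by auto
      then have "w = skip v (w - 1)" "w - 1 \<in> {0..<N-1}" using w by (auto simp: skip_def)
      then show ?thesis by blast
    qed
  qed
qed

lemma sum_skip:
  fixes h :: "nat \<Rightarrow> real"
  assumes "v < N"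
  shows "(\<Sum>i<N-1. h (skip v i)) = (\<Sum>i\<in>{..<N} - {v}. h i)"
proof -
  have "(\<Sum>i\<in>{..<N} - {v}. h i) = sum h (skip v ` {0..<N-1})" using skip_img[OF assms] by simp
  also have "\<dots> = (\<Sum>i\<in>{0..<N-1}. h (skip v i))" by (subst sum.reindex[OF skip_inj]) simp
  finally show ?thesis by (simp add: atLeast0LessThan)
qed

lemma sum_del1:
  fixes h :: "nat \<Rightarrow> real"
  shows "(\<Sum>v<N. \<Sum>i\<in>{..<N} - {v}. h i) = (real N - 1) * (\<Sum>i<N. h i)"
proof -
  have "(\<Sum>v<N. \<Sum>i\<in>{..<N} - {v}. h i) = (\<Sum>v<N. (\<Sum>i<N. h i) - h v)"
    by (intro sum.cong refl) (simp add: sum_diff1)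
  also have "\<dots> = (real N - 1) * (\<Sum>i<N. h i)" by (simp add: sum_subtractf algebra_simps)
  finally show ?thesis .
qed

lemma sum_del2:
  fixes g :: "nat \<Rightarrow> nat \<Rightarrow> real"
  assumes g0: "\<And>v. g v v = 0"
  shows "(\<Sum>v<N. \<Sum>i\<in>{..<N} - {v}. \<Sum>j\<in>{..<N} - {v}. g i j) = (real N - 2) * (\<Sum>i<N. \<Sum>j<N. g i j)"
proof -
  define T where "T = (\<Sum>i<N. \<Sum>j<N. g i j)"
  have inner: "(\<Sum>i\<in>{..<N} - {v}. \<Sum>j\<in>{..<N} - {v}. g i j) = T - (\<Sum>j<N. g v j) - (\<Sum>i<N. g i v)"
    if v: "v < N" for v
  proof -
    have "(\<Sum>i\<in>{..<N} - {v}. \<Sum>j\<in>{..<N} - {v}. g i j) = (\<Sum>i\<in>{..<N} - {v}. (\<Sum>j<N. g i j) - g i v)"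
      using v by (intro sum.cong refl) (simp add: sum_diff1)
    also have "\<dots> = (\<Sum>i\<in>{..<N} - {v}. (\<Sum>j<N. g i j)) - (\<Sum>i\<in>{..<N} - {v}. g i v)"
      by (simp add: sum_subtractf)
    also have "\<dots> = (T - (\<Sum>j<N. g v j)) - ((\<Sum>i<N. g i v) - g v v)"
      using v by (simp add: sum_diff1 T_def)
    finally show ?thesis using g0 by simp
  qed
  have "(\<Sum>v<N. \<Sum>i\<in>{..<N} - {v}. \<Sum>j\<in>{..<N} - {v}. g i j) = (\<Sum>v<N. T - (\<Sum>j<N. g v j) - (\<Sum>i<N. g i v))"
    using inner by (intro sum.cong refl) simp
  also have "\<dots> = real N * T - T - (\<Sum>v<N. \<Sum>i<N. g i v)"
    by (simp add: sum_subtractf T_def)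
  also have "(\<Sum>v<N. \<Sum>i<N. g i v) = T" unfolding T_def by (rule sum.swap)
  finally show ?thesis unfolding T_def by (simp add: algebra_simps)
qed

lemma fam_Max:
  assumes graphs: "\<forall>G \<in> \<G>. is_graph G" and ne: "family_n \<G> n \<noteq> {}"
  shows "\<exists>G \<in> family_n \<G> n. lambda_alpha \<alpha> G = lambda_alpha_fam \<alpha> \<G> n"
    and "\<And>G. G \<in> family_n \<G> n \<Longrightarrow> lambda_alpha \<alpha> G \<le> lambda_alpha_fam \<alpha> \<G> n"
proof -
  have fin: "finite (lambda_alpha \<alpha> ` family_n \<G> n)" using family_finite[OF graphs] by simp
  have ne': "lambda_alpha \<alpha> ` family_n \<G> n \<noteq> {}" using ne by simp
  show "\<exists>G \<in> family_n \<G> n. lambda_alpha \<alpha> G = lambda_alpha_fam \<alpha> \<G> n"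
    using Max_in[OF fin ne'] unfolding lambda_alpha_fam_def by auto
  show "\<And>G. G \<in> family_n \<G> n \<Longrightarrow> lambda_alpha \<alpha> G \<le> lambda_alpha_fam \<alpha> \<G> n"
    unfolding lambda_alpha_fam_def using fin by (intro Max_ge) auto
qed

lemma lam_nonneg:
  assumes G: "is_graph G" and n: "fst G \<ge> 1" and a: "0 \<le> \<alpha>"
  shows "lambda_alpha \<alpha> G \<ge> 0"
proof -
  have sym: "\<And>i j. i < fst G \<Longrightarrow> j < fst G \<Longrightarrow> A_alpha \<alpha> G i j = A_alpha \<alpha> G j i"
    using A_sym[OF G] by blast
  have k: "0 < fst G" using n by simp
  have "quad (A_alpha \<alpha> G) (fst G) (\<lambda>i. 0 + (if i = 0 then 1 else 0)) = A_alpha \<alpha> G 0 0"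
    using quad_pert[OF sym k, where x="\<lambda>_. 0" and t=1] by (simp add: quad_def)
  moreover have "nrm (fst G) (\<lambda>i. 0 + (if i = 0 then 1 else 0)) = 1"
    using nrm_pert[OF k, where x="\<lambda>_. 0" and t=1] by (simp add: nrm_def)
  moreover have "A_alpha \<alpha> G 0 0 \<ge> 0"
    using G a unfolding A_alpha_def is_graph_def by (cases G) auto
  ultimately show ?thesis using lam_props(3)[OF G n, where \<alpha>=\<alpha> and y="\<lambda>i. 0 + (if i = 0 then 1 else 0)"] by simp
qed



lemma step:
  assumes graphs: "\<forall>G \<in> \<G>. is_graph G" and her: "hereditary \<G>"
    and ne: "\<forall>n. family_n \<G> n \<noteq> {}" and N: "N \<ge> 2"
  shows "(real N - 2) * lambda_alpha_fam \<alpha> \<G> N \<le> (real N - 1) * lambda_alpha_fam \<alpha> \<G> (N-1)"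
proof -
  obtain G where G: "G \<in> family_n \<G> N" and lG: "lambda_alpha \<alpha> G = lambda_alpha_fam \<alpha> \<G> N"
    using fam_Max(1)[OF graphs, where n=N and \<alpha>=\<alpha>] ne by blast
  have Gg: "is_graph G" and fG: "fst G = N" using G graphs by (auto simp: family_n_def)
  define l where "l = lambda_alpha \<alpha> G"
  have "is_eigenvalue_alpha \<alpha> G l" unfolding l_def using lam_props(1)[OF Gg] fG N by simp
  then obtain x where x0: "\<exists>i<N. x i \<noteq> 0" and evx: "\<forall>i<N. (\<Sum>j<N. A_alpha \<alpha> G i j * x j) = l * x i"
    unfolding is_eigenvalue_alpha_def fG by auto
  define S where "S = nrm N x"
  have Spos: "S > 0"
  proof -
    obtain i where i: "i < N" "x i \<noteq> 0" using x0 by blast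
    have "(x i)^2 \<le> S" unfolding S_def nrm_def using i by (intro member_le_sum) auto
    moreover have "(x i)^2 > 0" using i by simp
    ultimately show ?thesis by linarith
  qed
  define g where "g = (\<lambda>i j. if snd G i j then \<alpha> * (x i)^2 + (1-\<alpha>) * x i * x j else 0)"
  have T: "(\<Sum>i<N. \<Sum>j<N. g i j) = l * S"
    using quad_graph[of \<alpha> G x] quad_eig[of N "A_alpha \<alpha> G" x l] evx fG unfolding g_def S_def by simp
  have g0: "\<And>v. g v v = 0" using Gg by (cases G) (auto simp: g_def is_graph_def)
  define F1 where "F1 = lambda_alpha_fam \<alpha> \<G> (N-1)"
  have bound: "(\<Sum>i\<in>{..<N}-{v}. \<Sum>j\<in>{..<N}-{v}. g i j) \<le> F1 * (\<Sum>i\<in>{..<N}-{v}. (x i)^2)"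
    if v: "v < N" for v
  proof -
    define H where "H = induced_sub G (N-1) (skip v)"
    have "inj_on (skip v) {0..<N-1}" by (rule skip_inj)
    moreover have "skip v ` {0..<N-1} \<subseteq> {0..<fst G}" using skip_img[OF v] fG by auto
    ultimately have HG: "H \<in> \<G>" using her G unfolding hereditary_def H_def family_n_def by blast
    have fH: "fst H = N-1" by (simp add: H_def induced_sub_def)
    have Hg: "is_graph H" using graphs HG by auto
    have HF: "H \<in> family_n \<G> (N-1)" using HG fH by (simp add: family_n_def)
    have sH: "snd H i j = (i < N-1 \<and> j < N-1 \<and> snd G (skip v i) (skip v j))" for i j
      by (simp add: H_def induced_sub_def)
    define y where "y = (\<lambda>i. x (skip v i))"
    have q: "quad (A_alpha \<alpha> H) (N-1) y = (\<Sum>i\<in>{..<N}-{v}. \<Sum>j\<in>{..<N}-{v}. g i j)"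
    proof -
      have "quad (A_alpha \<alpha> H) (N-1) y = (\<Sum>i<N-1. \<Sum>j<N-1. g (skip v i) (skip v j))"
        unfolding quad_graph[of \<alpha> H y, unfolded fH]
        by (intro sum.cong refl) (simp add: sH g_def y_def)
      also have "\<dots> = (\<Sum>i\<in>{..<N}-{v}. \<Sum>j<N-1. g i (skip v j))" by (rule sum_skip[OF v])
      also have "\<dots> = (\<Sum>i\<in>{..<N}-{v}. \<Sum>j\<in>{..<N}-{v}. g i j)" by (intro sum.cong refl sum_skip[OF v])
      finally show ?thesis .
    qed
    have nq: "nrm (N-1) y = (\<Sum>i\<in>{..<N}-{v}. (x i)^2)"
      unfolding nrm_def y_def by (rule sum_skip[OF v])
    have "quad (A_alpha \<alpha> H) (N-1) y \<le> lambda_alpha \<alpha> H * nrm (N-1) y"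
      using lam_props(3)[OF Hg, where \<alpha>=\<alpha> and y=y] fH N by simp
    also have "\<dots> \<le> F1 * nrm (N-1) y"
      using fam_Max(2)[OF graphs, where n="N-1" and \<alpha>=\<alpha>] ne HF nrm_nonneg
      by (intro mult_right_mono) (auto simp: F1_def)
    finally show ?thesis using q nq by simp
  qed
  have "(real N - 2) * (l * S) = (\<Sum>v<N. \<Sum>i\<in>{..<N}-{v}. \<Sum>j\<in>{..<N}-{v}. g i j)"
    using sum_del2[where g=g and N=N] g0 T by simp
  also have "\<dots> \<le> (\<Sum>v<N. F1 * (\<Sum>i\<in>{..<N}-{v}. (x i)^2))" by (intro sum_mono bound) simp
  also have "\<dots> = F1 * ((real N - 1) * S)"
    using sum_del1[where N=N and h="\<lambda>i. (x i)^2"] by (simp add: sum_distrib_left[symmetric] S_def nrm_def)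
  finally have "((real N - 2) * l) * S \<le> ((real N - 1) * F1) * S" by (simp add: algebra_simps)
  then have "(real N - 2) * l \<le> (real N - 1) * F1" using Spos by simp
  then show ?thesis using lG l_def F1_def by simp
qed



lemma fr: fixes a b c d :: real assumes "c > 0" "d > 0" "a * d \<le> b * c" shows "a / c \<le> b / d"
  using assms by (simp add: divide_simps mult.commute)

lemma div_le_aux: fixes l L :: real assumes "l / real n \<le> L" "n \<ge> 1" shows "l \<le> L * real n"
  using assms by (simp add: divide_le_eq)

lemma blow_frac: fixes l F :: real assumes "real (p+1) * l \<le> F" "n \<ge> 1" shows "l / real n \<le> F / real (n * (p+1))"
proof -
  have e: "real (n * (p+1)) = real (p+1) * real n" by (simp add: algebra_simps)
  have "l / real n = (real (p+1) * l) / (real (p+1) * real n)"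
    by (rule mult_divide_mult_cancel_left[symmetric]) simp
  then have "l / real n = (real (p+1) * l) / real (n * (p+1))" unfolding e .
  then show ?thesis using assms by (simp add: divide_right_mono)
qed


theorem lemma5p7:
  fixes \<G> :: "graph set" and r :: nat and \<alpha> :: real
  assumes graphs: "\<forall>G \<in> \<G>. is_graph G"
    and her: "hereditary \<G>"
    and mult: "multiplicative \<G>"
    and nonempty: "\<forall>n. family_n \<G> n \<noteq> {}"
    and r: "r \<ge> 2"
    and alpha: "0 \<le> \<alpha>" "\<alpha> \<le> 1 - 1 / real r"
    and large: "\<forall>\<^sub>F n in sequentially.
        lambda_alpha_fam \<alpha> \<G> n > (1 - 1 / real r) * real n - (1 - 1 / real r)"
  shows "convergent (\<lambda>n. lambda_alpha_fam \<alpha> \<G> n / real n) \<and>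
    (\<forall>n \<ge> 1. \<forall>G \<in> family_n \<G> n.
       lambda_alpha \<alpha> G \<le> lim (\<lambda>n. lambda_alpha_fam \<alpha> \<G> n / real n) * real n)"
proof -
  define F where "F = lambda_alpha_fam \<alpha> \<G>"
  have Fnn: "F n \<ge> 0" if n: "n \<ge> 1" for n
  proof -
    obtain G where G: "G \<in> family_n \<G> n" and lG: "lambda_alpha \<alpha> G = F n"
      using fam_Max(1)[OF graphs, where n=n and \<alpha>=\<alpha>] nonempty unfolding F_def by blast
    have "is_graph G" "fst G = n" using G graphs by (auto simp: family_n_def)
    then show ?thesis using lam_nonneg[of G \<alpha>] n alpha(1) lG by simp
  qed
  define b where "b = (\<lambda>k. F (k+2) / (real k + 1))"
  have dec: "decseq b"
  proof (rule decseq_SucI)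
    fix k
    have st: "(real (Suc (Suc (Suc k))) - 2) * F (Suc (Suc (Suc k))) \<le> (real (Suc (Suc (Suc k))) - 1) * F (Suc (Suc (Suc k)) - 1)"
      unfolding F_def by (rule step[OF graphs her nonempty]) simp
    have "(real k + 1) * F (Suc (Suc (Suc k))) \<le> (real k + 2) * F (Suc (Suc k))"
      using st by (simp add: algebra_simps)
    then show "b (Suc k) \<le> b k" unfolding b_def
      by (intro fr) (auto simp: algebra_simps)
  qed
  have bnn: "\<forall>k. 0 \<le> b k" unfolding b_def using Fnn by simp
  obtain L where bL: "b \<longlonglongrightarrow> L" using decseq_convergent[OF dec bnn] by blast
  have rat: "(\<lambda>k. real (Suc k) / real (Suc (Suc k))) \<longlonglongrightarrow> 1"
    using LIMSEQ_Suc[OF LIMSEQ_n_over_Suc_n[where 'a=real]] by simp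
  have t1: "(\<lambda>k. b k * (real (Suc k) / real (Suc (Suc k)))) \<longlonglongrightarrow> L * 1"
    by (intro tendsto_mult bL rat)
  have eq: "(\<lambda>k. b k * (real (Suc k) / real (Suc (Suc k)))) = (\<lambda>k. F (k + 2) / real (k + 2))"
  proof
    fix k
    have aux: "z / a * (a / c) = z / c" if "a \<noteq> 0" for z a c :: real using that by simp
    have "b k * (real (Suc k) / real (Suc (Suc k))) = F (k+2) / (real k + 1) * ((real k + 1) / real (k+2))"
      unfolding b_def by (simp add: add.commute)
    also have "\<dots> = F (k+2) / real (k+2)" by (rule aux) simp
    finally show "b k * (real (Suc k) / real (Suc (Suc k))) = F (k + 2) / real (k + 2)" .
  qed
  have t2: "(\<lambda>k. F (k + 2) / real (k + 2)) \<longlonglongrightarrow> L"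
    using t1 unfolding eq mult_1_right .
  have aL: "(\<lambda>n. F n / real n) \<longlonglongrightarrow> L"
    by (rule LIMSEQ_offset[where k=2]) (rule t2)
  have conv: "convergent (\<lambda>n. F n / real n)" using aL by (auto simp: convergent_def)
  have limL: "lim (\<lambda>n. F n / real n) = L" using aL by (rule limI)
  have bound: "lambda_alpha \<alpha> G \<le> L * real n" if n: "n \<ge> 1" and G: "G \<in> family_n \<G> n" for n G
  proof -
    have Gg: "is_graph G" and fG: "fst G = n" "G \<in> \<G>" using G graphs by (auto simp: family_n_def)
    have le: "lambda_alpha \<alpha> G / real n \<le> F (n * (p+1)) / real (n * (p+1))" for p
    proof -
      define B where "B = blowup G (p+1)"
      have B\<G>: "B \<in> \<G>" using mult fG(2) unfolding multiplicative_def B_def by auto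
      have fB: "fst B = n * (p+1)" by (simp add: B_def blowup_def fG)
      have BF: "B \<in> family_n \<G> (n * (p+1))" using B\<G> fB by (simp add: family_n_def)
      have Bg: "is_graph B" using graphs B\<G> by auto
      have "is_eigenvalue_alpha \<alpha> B (real (p+1) * lambda_alpha \<alpha> G)"
        unfolding B_def by (rule blow_eig[OF lam_props(1)[OF Gg]]) (use fG n in auto)
      then have "real (p+1) * lambda_alpha \<alpha> G \<le> lambda_alpha \<alpha> B"
        using lam_props(2)[OF Bg] fB n by simp
      also have "\<dots> \<le> F (n * (p+1))"
        using fam_Max(2)[OF graphs, where n="n * (p+1)" and \<alpha>=\<alpha>] nonempty BF unfolding F_def by blast
      finally have "real (p+1) * lambda_alpha \<alpha> G \<le> F (n * (p+1))" .
      then show ?thesis using n by (rule blow_frac)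
    qed
    have sm: "strict_mono (\<lambda>p. n * (p+1))" using n by (intro strict_monoI) simp
    have "((\<lambda>n. F n / real n) \<circ> (\<lambda>p. n * (p+1))) \<longlonglongrightarrow> L" by (rule LIMSEQ_subseq_LIMSEQ[OF aL sm])
    then have "lambda_alpha \<alpha> G / real n \<le> L"
      by (rule LIMSEQ_le_const) (use le in auto)
    then show ?thesis using n by (rule div_le_aux)
  qed
  show ?thesis using conv limL bound unfolding F_def by auto
qed

end
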